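(* Consider the client selection problem and the COCS policy described in the context, run with input parameters $K(t)=t^{z}\log(t)$ and $h_T=\lceil T^{\gamma}\rceil$, where $0<z<1$ and $0<\gamma<\frac12$. Then the expected regret incurred in exploration rounds satisfies $$\mathbb{E}[R_{\text{explore}}(T)]\le \frac{4N^2MB}{c^{\min}}\left(T^{z+2\gamma}\log(T)+T^{2\gamma}\right),$$ where $c^{\min}=\min_{n,t}c_n(y_n^t)$.
   Context: Setting. There are $N$ clients indexed by $\mathcal N=\{1,\dots,N\}$, $M$ edge servers (ESs) indexed by $\mathcal M=\{1,\dots,M\}$, and rounds $t=1,\dots,T$. In round $t$, ES $m$ can communicate with a set $\mathcal N_m^t\subseteq\mathcal N$ of clients (these sets may overlap). Each client $n$ reveals computation resources $y_n^t$ and charges a cost $c_n(y_n^t)>0$, with $c_n$ nondecreasing; $c^{\min}=\min_{n,t}c_n(y_n^t)$. Each ES has budget $B>0$. A feasible client selection decision in round $t$ is $\bm s^t=(\bm s_1^t,\dots,\bm s_M^t)$ with $\bm s_m^t\subseteq\mathcal N_m^t$, $\sum_{n\in\bm s_m^t}c_n(y_n^t)\le B$ for every $m$, and $\bm s_m^t\cap\bm s_{m'}^t=\emptyset$ for $m\neq m'$. Each client-ES pair $(n,m)$ with $n\in\mathcal N_m^t$ has an observed context $\phi_{n,m}^t\in\Phi=[0,1]^2$. If client $n$ is selected by ES $m$ in round $t$, its participation indicator $X_{n,m}^t\in\{0,1\}$ is Bernoulli with mean $p_{n,m}(\phi_{n,m}^t)$, where $p_{n,m}:\Phi\to[0,1]$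 is unknown. The utility is $\mu(\bm s^t;\bm X^t)=\frac1M\sum_{m\in\mathcal M}\sum_{n\in\bm s_m^t}X_{n,m}^t$ (and $\mu(\bm s;\bm p^t)$ is the same expression with $p_{n,m}(\phi^t_{n,m})$ in place of $X^t_{n,m}$). The oracle decision $\bm s^{\mathrm{opt},t}$ maximizes $\mu(\bm s;\bm p^t)$ over feasible decisions. The expected regret of a policy choosing $\bm s^1,\dots,\bm s^T$ is $\mathbb E[R(T)]=\sum_{t=1}^T(\mathbb E[\mu(\bm s^{\mathrm{opt},t};\bm X^t)]-\mathbb E[\mu(\bm s^t;\bm X^t)])$. COCS policy (inputs: increasing function $K$, integer $h_T$). Partition $\Phi$ into $h_T^2$ squares of side $1/h_T$. For each pair $(n,m)$ and square $l$ keep a counter $C_{n,m}(l)$ (initially $0$) and an estimate $\hat p_{n,m}(l)$ equal to the sample mean of the indicators observed when $n$ was selected by $m$ with context in $l$ (initially $0$). In round $t$: observe all contexts, let $l^t_{n,m}$ be the square containing $\phi^t_{n,m}$ and set $\hat X^t_{n,m}=\hat p_{n,m}(l^t_{n,m})$; a pair is under-explored if $C_{n,m}(l^t_{n,m})\le K(t)$. If an under-explored pair exists (exploration round), select a feasible decision that first maximizes the number of selected under-explored clients and then spends the remaining per-ES budget on explored clients so as to maximize $\mu(\cdot;\hat{\bm X}^t)$ (when every ES has under-explored clients, simply a feasible decision of maximum cardinality). Otherwise (exploitation round), select a feasible $\bm s^t$ maximizing $\mu(\bm s;\hat{\bm X}^t)$. At the end of the round, for each selected pair observe $X^t_{n,m}$,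 update $\hat p_{n,m}(l^t_{n,m})$ as a running mean and increment $C_{n,m}(l^t_{n,m})$. $R_{\text{explore}}(T)$ and $R_{\text{exploit}}(T)$ denote the parts of the regret summed over exploration rounds and over exploitation rounds respectively, so $R(T)=R_{\text{explore}}(T)+R_{\text{exploit}}(T)$. *)

theory Defs
  imports "HOL-Probability.Probability"
begin

text \<open>Clients are 1..N, edge servers 1..M, rounds 1..T.
  A decision is a function from ES index m to the set of clients it selects.
  Nav m is the set of clients ES m can reach in the round; cst n = c_n(y_n^t).\<close>

definition feasible :: "nat \<Rightarrow> (nat \<Rightarrow> nat set) \<Rightarrow> (nat \<Rightarrow> real) \<Rightarrow> real \<Rightarrow> (nat \<Rightarrow> nat set) \<Rightarrow> bool" where
  "feasible M Nav cst B sm \<longleftrightarrow>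
     (\<forall>m\<in>{1..M}. sm m \<subseteq> Nav m \<and> (\<Sum>n\<in>sm m. cst n) \<le> B) \<and>
     (\<forall>m\<in>{1..M}. \<forall>m'\<in>{1..M}. m \<noteq> m' \<longrightarrow> sm m \<inter> sm m' = {})"

definition util :: "nat \<Rightarrow> (nat \<Rightarrow> nat set) \<Rightarrow> (nat \<Rightarrow> nat \<Rightarrow> real) \<Rightarrow> real" where
  "util M sm v = (1 / real M) * (\<Sum>m\<in>{1..M}. \<Sum>n\<in>sm m. v n m)"

definition K_fun :: "real \<Rightarrow> nat \<Rightarrow> real" where
  "K_fun z t = real t powr z * ln (real t)"

definition h_fun :: "real \<Rightarrow> nat \<Rightarrow> nat" where
  "h_fun \<gamma> T = nat \<lceil>real T powr \<gamma>\<rceil>"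

text \<open>Square of side 1/h containing a context in [0,1]^2 (squares indexed by
  {0..h-1}^2; points on the right/top boundary belong to the last square).\<close>
definition cell :: "nat \<Rightarrow> real \<times> real \<Rightarrow> nat \<times> nat" where
  "cell h x = (min (h - 1) (nat \<lfloor>fst x * real h\<rfloor>), min (h - 1) (nat \<lfloor>snd x * real h\<rfloor>))"

text \<open>History quantities of COCS before round t, given decisions s (round, outcome, ES)
  and contexts phi (round, client, ES).\<close>
definition obs_rounds :: "nat \<Rightarrow> (nat \<Rightarrow> nat \<Rightarrow> nat \<Rightarrow> real \<times> real) \<Rightarrow> (nat \<Rightarrow> 'w \<Rightarrow> nat \<Rightarrow> nat set)
     \<Rightarrow> 'w \<Rightarrow> nat \<Rightarrow> nat \<Rightarrow> nat \<Rightarrow> nat \<times> nat \<Rightarrow> nat set" where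
  "obs_rounds h \<phi> s \<omega> t n m l = {\<tau>\<in>{1..<t}. n \<in> s \<tau> \<omega> m \<and> cell h (\<phi> \<tau> n m) = l}"

definition counter :: "nat \<Rightarrow> (nat \<Rightarrow> nat \<Rightarrow> nat \<Rightarrow> real \<times> real) \<Rightarrow> (nat \<Rightarrow> 'w \<Rightarrow> nat \<Rightarrow> nat set)
     \<Rightarrow> 'w \<Rightarrow> nat \<Rightarrow> nat \<Rightarrow> nat \<Rightarrow> nat \<times> nat \<Rightarrow> nat" where
  "counter h \<phi> s \<omega> t n m l = card (obs_rounds h \<phi> s \<omega> t n m l)"

definition phat :: "nat \<Rightarrow> (nat \<Rightarrow> nat \<Rightarrow> nat \<Rightarrow> real \<times> real) \<Rightarrow> (nat \<Rightarrow> 'w \<Rightarrow> nat \<Rightarrow> nat set)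
     \<Rightarrow> (nat \<Rightarrow> nat \<Rightarrow> nat \<Rightarrow> 'w \<Rightarrow> bool) \<Rightarrow> 'w \<Rightarrow> nat \<Rightarrow> nat \<Rightarrow> nat \<Rightarrow> nat \<times> nat \<Rightarrow> real" where
  "phat h \<phi> s X \<omega> t n m l =
     (if counter h \<phi> s \<omega> t n m l = 0 then 0
      else (\<Sum>\<tau>\<in>obs_rounds h \<phi> s \<omega> t n m l. of_bool (X \<tau> n m \<omega>)) / real (counter h \<phi> s \<omega> t n m l))"

definition under_explored :: "real \<Rightarrow> nat \<Rightarrow> (nat \<Rightarrow> nat \<Rightarrow> nat set) \<Rightarrow> (nat \<Rightarrow> nat \<Rightarrow> nat \<Rightarrow> real \<times> real)
     \<Rightarrow> (nat \<Rightarrow> 'w \<Rightarrow> nat \<Rightarrow> nat set) \<Rightarrow> 'w \<Rightarrow> nat \<Rightarrow> nat \<Rightarrow> nat \<Rightarrow> bool" where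
  "under_explored z h Nav \<phi> s \<omega> t n m \<longleftrightarrow>
     n \<in> Nav t m \<and> real (counter h \<phi> s \<omega> t n m (cell h (\<phi> t n m))) \<le> K_fun z t"

definition exploration_round :: "real \<Rightarrow> nat \<Rightarrow> nat \<Rightarrow> (nat \<Rightarrow> nat \<Rightarrow> nat set) \<Rightarrow> (nat \<Rightarrow> nat \<Rightarrow> nat \<Rightarrow> real \<times> real)
     \<Rightarrow> (nat \<Rightarrow> 'w \<Rightarrow> nat \<Rightarrow> nat set) \<Rightarrow> 'w \<Rightarrow> nat \<Rightarrow> bool" where
  "exploration_round z h M Nav \<phi> s \<omega> t \<longleftrightarrow>
     (\<exists>m\<in>{1..M}. \<exists>n\<in>Nav t m. under_explored z h Nav \<phi> s \<omega> t n m)"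

text \<open>Selection rule of COCS in one round. UE n m: pair (n,m) under-explored;
  Xh n m: current estimate hat X.\<close>
definition cocs_choice :: "nat \<Rightarrow> (nat \<Rightarrow> nat set) \<Rightarrow> (nat \<Rightarrow> real) \<Rightarrow> real \<Rightarrow> (nat \<Rightarrow> nat \<Rightarrow> bool)
     \<Rightarrow> (nat \<Rightarrow> nat \<Rightarrow> real) \<Rightarrow> (nat \<Rightarrow> nat set) \<Rightarrow> bool" where
  "cocs_choice M Nav cst B UE Xh sm \<longleftrightarrow>
    (if (\<exists>m\<in>{1..M}. \<exists>n\<in>Nav m. UE n m) then
       (if (\<forall>m\<in>{1..M}. \<exists>n\<in>Nav m. UE n m) then
          feasible M Nav cst B sm \<and> (\<forall>m\<in>{1..M}. \<forall>n\<in>sm m. UE n m) \<and>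
          (\<forall>s'. feasible M Nav cst B s' \<and> (\<forall>m\<in>{1..M}. \<forall>n\<in>s' m. UE n m) \<longrightarrow>
              (\<Sum>m\<in>{1..M}. card (s' m)) \<le> (\<Sum>m\<in>{1..M}. card (sm m)))
        else
          feasible M Nav cst B sm \<and>
          (\<forall>s'. feasible M Nav cst B s' \<longrightarrow>
              (\<Sum>m\<in>{1..M}. card {n\<in>s' m. UE n m}) \<le> (\<Sum>m\<in>{1..M}. card {n\<in>sm m. UE n m})) \<and>
          (\<forall>s'. feasible M Nav cst B s' \<and> (\<forall>m\<in>{1..M}. {n\<in>s' m. UE n m} = {n\<in>sm m. UE n m}) \<longrightarrow>
              util M s' Xh \<le> util M sm Xh))
     else
       feasible M Nav cst B sm \<and> (\<forall>s'. feasible M Nav cst B s' \<longrightarrow> util M s' Xh \<le> util M sm Xh))"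

definition R_explore :: "real \<Rightarrow> nat \<Rightarrow> nat \<Rightarrow> (nat \<Rightarrow> nat \<Rightarrow> nat set) \<Rightarrow> (nat \<Rightarrow> nat \<Rightarrow> nat \<Rightarrow> real \<times> real)
     \<Rightarrow> (nat \<Rightarrow> 'w \<Rightarrow> nat \<Rightarrow> nat set) \<Rightarrow> (nat \<Rightarrow> nat \<Rightarrow> nat set) \<Rightarrow> (nat \<Rightarrow> nat \<Rightarrow> nat \<Rightarrow> 'w \<Rightarrow> bool)
     \<Rightarrow> nat \<Rightarrow> 'w \<Rightarrow> real" where
  "R_explore z h M Nav \<phi> s sopt X T \<omega> =
     (\<Sum>t\<in>{1..T}. if exploration_round z h M Nav \<phi> s \<omega> t
        then util M (sopt t) (\<lambda>n m. of_bool (X t n m \<omega>)) - util M (s t \<omega>) (\<lambda>n m. of_bool (X t n m \<omega>))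
        else 0)"

definition c_min :: "nat \<Rightarrow> nat \<Rightarrow> (nat \<Rightarrow> real \<Rightarrow> real) \<Rightarrow> (nat \<Rightarrow> nat \<Rightarrow> real) \<Rightarrow> real" where
  "c_min N T c y = Min {c n (y n t) | n t. n \<in> {1..N} \<and> t \<in> {1..T}}"

end

theory Submission
  imports Defs
begin

lemma exists_sel:
  assumes cc: "cocs_choice M Nav cst B UE Xh sm"
    and m: "m \<in> {1..M}" and n: "n \<in> Nav m" and ue: "UE n m" and cB: "cst n \<le> B" and B0: "0 \<le> B"
  shows "\<exists>m\<in>{1..M}. \<exists>n\<in>sm m. UE n m"
proof -
  define s' where "s' = (\<lambda>m'. if m' = m then {n} else ({}::nat set))"
  have feas: "feasible M Nav cst B s'"
    unfolding feasible_def s'_def using n cB B0 by auto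
  have allue: "\<forall>m\<in>{1..M}. \<forall>x\<in>s' m. UE x m" unfolding s'_def using ue by auto
  have "{x. x = n \<and> UE x m} = {n}" using ue by auto
  have sum1: "(\<Sum>m'\<in>{1..M}. card {x\<in>s' m'. UE x m'}) = 1"
  proof -
    have "(\<Sum>m'\<in>{1..M}. card {x\<in>s' m'. UE x m'}) = (\<Sum>m'\<in>{1..M}. if m' = m then 1 else 0)"
      using ue by (intro sum.cong) (auto simp: s'_def ue \<open>{x. x = n \<and> UE x m} = {n}\<close>)
    also have "\<dots> = 1" using m by simp
    finally show ?thesis .
  qed
  have sum1': "(\<Sum>m'\<in>{1..M}. card (s' m')) = 1"
  proof -
    have "(\<Sum>m'\<in>{1..M}. card (s' m')) = (\<Sum>m'\<in>{1..M}. if m' = m then 1 else 0)"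
      by (rule sum.cong) (auto simp: s'_def)
    also have "\<dots> = 1" using m by simp
    finally show ?thesis .
  qed
  have ex: "\<exists>m\<in>{1..M}. \<exists>n\<in>Nav m. UE n m" using m n ue by blast
  have "1 \<le> (\<Sum>m\<in>{1..M}. card {n\<in>sm m. UE n m})"
  proof (cases "\<forall>m\<in>{1..M}. \<exists>n\<in>Nav m. UE n m")
    case True
    with cc ex have f: "feasible M Nav cst B sm" and a: "\<forall>m\<in>{1..M}. \<forall>n\<in>sm m. UE n m"
      and mx: "(\<Sum>m\<in>{1..M}. card (s' m)) \<le> (\<Sum>m\<in>{1..M}. card (sm m))"
      unfolding cocs_choice_def using feas allue by auto
    have "(\<Sum>m\<in>{1..M}. card (sm m)) = (\<Sum>m\<in>{1..M}. card {n\<in>sm m. UE n m})"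
    proof (rule sum.cong)
      fix x assume "x \<in> {1..M}"
      then have "{n\<in>sm x. UE n x} = sm x" using a by auto
      then show "card (sm x) = card {n\<in>sm x. UE n x}" by simp
    qed simp
    then show ?thesis using mx sum1' by simp
  next
    case False
    have "\<forall>s'. feasible M Nav cst B s' \<longrightarrow>
              (\<Sum>m\<in>{1..M}. card {n\<in>s' m. UE n m}) \<le> (\<Sum>m\<in>{1..M}. card {n\<in>sm m. UE n m})"
      using cc ex False unfolding cocs_choice_def if_P[OF ex] if_not_P[OF False] by blast
    then have "(\<Sum>m\<in>{1..M}. card {n\<in>s' m. UE n m}) \<le> (\<Sum>m\<in>{1..M}. card {n\<in>sm m. UE n m})"
      using feas by blast
    then show ?thesis using sum1 by simp
  qed
  then show ?thesis
  proof (rule contrapos_pp)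
    assume "\<not> (\<exists>m\<in>{1..M}. \<exists>n\<in>sm m. UE n m)"
    then have "\<forall>m\<in>{1..M}. {n\<in>sm m. UE n m} = {}" by auto
    then have "(\<Sum>m\<in>{1..M}. card {n\<in>sm m. UE n m}) = 0"
      by (intro sum.neutral) (simp del: Collect_empty_eq)
    then show "\<not> 1 \<le> (\<Sum>m\<in>{1..M}. card {n\<in>sm m. UE n m})" by linarith
  qed
qed

lemma fiber:
  fixes S :: "nat set" and k :: real
  assumes S: "S \<subseteq> {1..T}" and k: "0 \<le> k"
    and P: "\<forall>t\<in>S. n \<in> s t \<omega> m \<and> cell h (\<phi> t n m) = l \<and> real (counter h \<phi> s \<omega> t n m l) \<le> k"
  shows "real (card S) \<le> k + 1"
proof (cases "S = {}")
  case True then show ?thesis using k by simp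
next
  case False
  have fin: "finite S" using S finite_subset by blast
  define tm where "tm = Max S"
  have tm: "tm \<in> S" using fin False tm_def by simp
  have sub: "S - {tm} \<subseteq> obs_rounds h \<phi> s \<omega> tm n m l"
  proof
    fix t assume t: "t \<in> S - {tm}"
    then have "t \<le> tm" using fin tm_def by simp
    with t have "t < tm" by auto
    moreover have "1 \<le> t" using t S by auto
    ultimately show "t \<in> obs_rounds h \<phi> s \<omega> tm n m l"
      unfolding obs_rounds_def using t P by auto
  qed
  have "finite (obs_rounds h \<phi> s \<omega> tm n m l)" unfolding obs_rounds_def by simp
  then have "card (S - {tm}) \<le> counter h \<phi> s \<omega> tm n m l"
    unfolding counter_def using sub card_mono by blast
  moreover have "card S = card (S - {tm}) + 1" using fin tm
    by (metis One_nat_def add.right_neutral add_Suc_right card.remove)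
  ultimately have "real (card S) \<le> real (counter h \<phi> s \<omega> tm n m l) + 1" by simp
  then show ?thesis using P tm by fastforce
qed

lemma K_mono:
  assumes "0 < z" "1 \<le> a" "a \<le> b"
  shows "K_fun z a \<le> K_fun z b"
  unfolding K_fun_def
proof (rule mult_mono)
  show "real a powr z \<le> real b powr z" using assms by (intro powr_mono2) auto
  show "ln (real a) \<le> ln (real b)" using assms by simp
  show "0 \<le> real b powr z" by simp
  show "0 \<le> ln (real a)" using assms by simp
qed

lemma util_le:
  assumes "\<forall>m\<in>{1..M}. sm m \<subseteq> {1..N}" "\<forall>n m. v n m \<le> 1" "M \<ge> 1"
  shows "util M sm v \<le> real N"
proof -
  have "(\<Sum>m\<in>{1..M}. \<Sum>n\<in>sm m. v n m) \<le> (\<Sum>m\<in>{1..M}. real N)"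
  proof (rule sum_mono)
    fix m assume m: "m \<in> {1..M}"
    then have sub: "sm m \<subseteq> {1..N}" using assms by auto
    then have "finite (sm m)" using finite_subset by blast
    have "(\<Sum>n\<in>sm m. v n m) \<le> (\<Sum>n\<in>sm m. 1)" using assms by (intro sum_mono) auto
    also have "\<dots> = real (card (sm m))" by simp
    also have "\<dots> \<le> real N" using card_mono[OF _ sub] by simp
    finally show "(\<Sum>n\<in>sm m. v n m) \<le> real N" .
  qed
  then have "(\<Sum>m\<in>{1..M}. \<Sum>n\<in>sm m. v n m) \<le> real M * real N" by simp
  then show ?thesis unfolding util_def using assms(3)
    by (simp add: field_simps)
qed

lemma util_nonneg:
  assumes "\<forall>n m. 0 \<le> v n m"
  shows "0 \<le> util M sm v"
  unfolding util_def using assms by (intro mult_nonneg_nonneg sum_nonneg) auto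


theorem lemma1:
  fixes N M T :: nat and B z \<gamma> :: real
    and Nav :: "nat \<Rightarrow> nat \<Rightarrow> nat set"
    and c :: "nat \<Rightarrow> real \<Rightarrow> real" and y :: "nat \<Rightarrow> nat \<Rightarrow> real"
    and \<phi> :: "nat \<Rightarrow> nat \<Rightarrow> nat \<Rightarrow> real \<times> real"
    and p :: "nat \<Rightarrow> nat \<Rightarrow> real \<times> real \<Rightarrow> real"
    and P :: "'w measure"
    and X :: "nat \<Rightarrow> nat \<Rightarrow> nat \<Rightarrow> 'w \<Rightarrow> bool"
    and s :: "nat \<Rightarrow> 'w \<Rightarrow> nat \<Rightarrow> nat set"
    and sopt :: "nat \<Rightarrow> nat \<Rightarrow> nat set"
  assumes N: "N \<ge> 1" and M: "M \<ge> 1" and T: "T \<ge> 1" and B: "B > 0"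
    and z: "0 < z" "z < 1" and gam: "0 < \<gamma>" "\<gamma> < 1/2"
    and Nav: "\<forall>t m. Nav t m \<subseteq> {1..N}"
    and c_mono: "\<forall>n. mono (c n)"
    and c_pos: "\<forall>n t. c n (y n t) > 0"
    and c_le_B: "\<forall>n\<in>{1..N}. \<forall>t. c n (y n t) \<le> B"
    and ctx: "\<forall>t n m. \<phi> t n m \<in> {0..1} \<times> {0..1}"
    and p_range: "\<forall>n m x. p n m x \<in> {0..1}"
    and P: "prob_space P"
    and X_rv: "\<forall>t n m. X t n m \<in> measurable P (count_space UNIV)"
    and X_bern: "\<forall>t\<ge>1. \<forall>m\<in>{1..M}. \<forall>n\<in>Nav t m.
                   measure P {\<omega>\<in>space P. X t n m \<omega>} = p n m (\<phi> t n m)"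
    and X_indep: "prob_space.indep_vars P (\<lambda>_. count_space UNIV) (\<lambda>(t, n, m). X t n m)
                   {(t, n, m). 1 \<le> t \<and> m \<in> {1..M} \<and> n \<in> Nav t m}"
    and opt_decision: "\<forall>t\<in>{1..T}. feasible M (Nav t) (\<lambda>n. c n (y n t)) B (sopt t) \<and>
                   (\<forall>s'. feasible M (Nav t) (\<lambda>n. c n (y n t)) B s' \<longrightarrow>
                      util M s' (\<lambda>n m. p n m (\<phi> t n m)) \<le> util M (sopt t) (\<lambda>n m. p n m (\<phi> t n m)))"
    and s_meas: "\<forall>t\<in>{1..T}. s t \<in> measurable P (count_space UNIV)"
    and cocs: "\<forall>t\<in>{1..T}. \<forall>\<omega>\<in>space P.
                 cocs_choice M (Nav t) (\<lambda>n. c n (y n t)) B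
                   (\<lambda>n m. under_explored z (h_fun \<gamma> T) Nav \<phi> s \<omega> t n m)
                   (\<lambda>n m. phat (h_fun \<gamma> T) \<phi> s X \<omega> t n m (cell (h_fun \<gamma> T) (\<phi> t n m)))
                   (s t \<omega>)"
  shows "prob_space.expectation P (R_explore z (h_fun \<gamma> T) M Nav \<phi> s sopt X T)
           \<le> 4 * real N ^ 2 * real M * B / c_min N T c y
              * (real T powr (z + 2 * \<gamma>) * ln (real T) + real T powr (2 * \<gamma>))"
proof -
  interpret P: prob_space P by (rule P)
  define h where "h = h_fun \<gamma> T"
  define k where "k = K_fun z T"
  have T1: "real T \<ge> 1" using T by simp
  have Tg: "real T powr \<gamma> \<ge> 1" using T1 gam by (simp add: ge_one_powr_ge_zero)
  have h1: "h \<ge> 1" unfolding h_def h_fun_def using Tg by linarith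
  have hle: "real h \<le> 2 * real T powr \<gamma>" unfolding h_def h_fun_def using Tg
  proof -
    have c0: "0 \<le> \<lceil>real T powr \<gamma>\<rceil>" using Tg by simp
    have "real (nat \<lceil>real T powr \<gamma>\<rceil>) = real_of_int \<lceil>real T powr \<gamma>\<rceil>" using c0 by simp
    moreover have "real_of_int \<lceil>real T powr \<gamma>\<rceil> - 1 < real T powr \<gamma>" using ceiling_correct by blast
    ultimately show "real (nat \<lceil>real T powr \<gamma>\<rceil>) \<le> 2 * real T powr \<gamma>" using Tg by linarith
  qed
  have k0: "0 \<le> k" unfolding k_def K_fun_def using T1 by simp
  define A where "A = {1..N} \<times> {1..M} \<times> ({..<h} \<times> {..<h})"
  have cardA: "card A = N * M * (h * h)" unfolding A_def by (simp add: card_cartesian_product)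
  have finA: "finite A" unfolding A_def by simp
  have pw: "\<forall>\<omega>\<in>space P. R_explore z h M Nav \<phi> s sopt X T \<omega> \<le> real N * (real (card A) * (k + 1))"
  proof
    fix \<omega> assume \<omega>: "\<omega> \<in> space P"
    define UE where "UE = (\<lambda>t n m. under_explored z h Nav \<phi> s \<omega> t n m)"
    define E where "E = {t\<in>{1..T}. exploration_round z h M Nav \<phi> s \<omega> t}"
    have sel: "\<exists>nm. snd nm \<in> {1..M} \<and> fst nm \<in> s t \<omega> (snd nm) \<and> UE t (fst nm) (snd nm)"
      if t: "t \<in> E" for t
    proof -
      from t have tT: "t \<in> {1..T}" and er: "exploration_round z h M Nav \<phi> s \<omega> t"
        unfolding E_def by auto
      from er obtain m n where m: "m \<in> {1..M}" and n: "n \<in> Nav t m" and ue: "UE t n m"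
        unfolding exploration_round_def UE_def by blast
      have nN: "n \<in> {1..N}" using n Nav by blast
      have cc: "cocs_choice M (Nav t) (\<lambda>n. c n (y n t)) B (UE t)
                   (\<lambda>n m. phat h \<phi> s X \<omega> t n m (cell h (\<phi> t n m))) (s t \<omega>)"
        using cocs tT \<omega> unfolding UE_def h_def by blast
      have "\<exists>m\<in>{1..M}. \<exists>n\<in>s t \<omega> m. UE t n m"
        by (rule exists_sel[OF cc m n ue]) (use c_le_B nN B in auto)
      then show ?thesis by force
    qed
    define sl where "sl = (\<lambda>t. SOME nm. snd nm \<in> {1..M} \<and> fst nm \<in> s t \<omega> (snd nm) \<and> UE t (fst nm) (snd nm))"
    have slp: "snd (sl t) \<in> {1..M} \<and> fst (sl t) \<in> s t \<omega> (snd (sl t)) \<and> UE t (fst (sl t)) (snd (sl t))"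
      if "t \<in> E" for t
      unfolding sl_def by (rule someI_ex) (rule sel[OF that])
    define f where "f = (\<lambda>t. (fst (sl t), snd (sl t), cell h (\<phi> t (fst (sl t)) (snd (sl t)))))"
    have fA: "f t \<in> A" if t: "t \<in> E" for t
    proof -
      from slp[OF t] have m: "snd (sl t) \<in> {1..M}" and ue: "UE t (fst (sl t)) (snd (sl t))" by auto
      then have "fst (sl t) \<in> Nav t (snd (sl t))" unfolding UE_def under_explored_def by blast
      then have "fst (sl t) \<in> {1..N}" using Nav by blast
      moreover have "fst (cell h x) < h" "snd (cell h x) < h" for x
        unfolding cell_def using h1 by auto
      ultimately show ?thesis unfolding A_def f_def using m by (auto simp: mem_Times_iff)
    qed
    have Esub: "E \<subseteq> (\<Union>a\<in>A. {t\<in>E. f t = a})" using fA by blast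
    have finE: "finite E" unfolding E_def by simp
    have fib: "real (card {t\<in>E. f t = a}) \<le> k + 1" if a: "a \<in> A" for a
    proof -
      obtain n m l where a': "a = (n, m, l)" by (cases a) auto
      show ?thesis
      proof (rule fiber[where T=T and n=n and s=s and \<omega>=\<omega> and m=m and h=h and \<phi>=\<phi> and l=l])
        show "{t \<in> E. f t = a} \<subseteq> {1..T}" unfolding E_def by auto
        show "0 \<le> k" by (rule k0)
        show "\<forall>t\<in>{t \<in> E. f t = a}. n \<in> s t \<omega> m \<and> cell h (\<phi> t n m) = l \<and>
                real (counter h \<phi> s \<omega> t n m l) \<le> k"
        proof
          fix t assume t: "t \<in> {t \<in> E. f t = a}"
          then have tE: "t \<in> E" and ft: "f t = (n, m, l)" using a' by auto
          from ft have sl: "sl t = (n, m)" and l: "cell h (\<phi> t n m) = l"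
            unfolding f_def by (auto simp: prod_eq_iff)
          from slp[OF tE] sl have ns: "n \<in> s t \<omega> m" and ue: "UE t n m" by auto
          from ue l have "real (counter h \<phi> s \<omega> t n m l) \<le> K_fun z t"
            unfolding UE_def under_explored_def by simp
          also have "\<dots> \<le> k" unfolding k_def
            using tE z by (intro K_mono) (auto simp: E_def)
          finally show "n \<in> s t \<omega> m \<and> cell h (\<phi> t n m) = l \<and> real (counter h \<phi> s \<omega> t n m l) \<le> k"
            using ns l by simp
        qed
      qed
    qed
    have "card E \<le> card (\<Union>a\<in>A. {t\<in>E. f t = a})"
    proof (rule card_mono[OF _ Esub])
      have "(\<Union>a\<in>A. {t\<in>E. f t = a}) \<subseteq> E" by blast
      then show "finite (\<Union>a\<in>A. {t\<in>E. f t = a})" using finE finite_subset by blast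
    qed
    also have "\<dots> \<le> (\<Sum>a\<in>A. card {t\<in>E. f t = a})" by (rule card_UN_le[OF finA])
    finally have "real (card E) \<le> real (\<Sum>a\<in>A. card {t\<in>E. f t = a})"
      by (simp only: of_nat_le_iff)
    also have "\<dots> = (\<Sum>a\<in>A. real (card {t\<in>E. f t = a}))" by (rule of_nat_sum)
    also have "\<dots> \<le> (\<Sum>a\<in>A. k + 1)" using fib by (intro sum_mono) auto
    also have "\<dots> = real (card A) * (k + 1)" by simp
    finally have cE: "real (card E) \<le> real (card A) * (k + 1)" .
    have "R_explore z h M Nav \<phi> s sopt X T \<omega> \<le> (\<Sum>t\<in>{1..T}. if t \<in> E then real N else 0)"
      unfolding R_explore_def
    proof (rule sum_mono)
      fix t assume tT: "t \<in> {1..T}"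
      let ?v = "\<lambda>n m. of_bool (X t n m \<omega>) :: real"
      have "util M (sopt t) ?v \<le> real N"
      proof (rule util_le)
        show "\<forall>m\<in>{1..M}. sopt t m \<subseteq> {1..N}"
          using opt_decision tT Nav unfolding feasible_def by blast
      qed (use M in auto)
      moreover have "0 \<le> util M (s t \<omega>) ?v" by (rule util_nonneg) auto
      ultimately show "(if exploration_round z h M Nav \<phi> s \<omega> t
            then util M (sopt t) ?v - util M (s t \<omega>) ?v else 0) \<le> (if t \<in> E then real N else 0)"
        using tT unfolding E_def by auto
    qed
    also have "\<dots> = real N * real (card E)"
    proof -
      have "(\<Sum>t\<in>{1..T}. if t \<in> E then real N else 0) = (\<Sum>t\<in>E. real N)"
        unfolding E_def by (simp add: sum.If_cases Int_def)
      then show ?thesis by simp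
    qed
    also have "\<dots> \<le> real N * (real (card A) * (k + 1))" using cE by (intro mult_left_mono) auto
    finally show "R_explore z h M Nav \<phi> s sopt X T \<omega> \<le> real N * (real (card A) * (k + 1))" .
  qed
  define C where "C = real N * (real (card A) * (k + 1))"
  have C0: "0 \<le> C" unfolding C_def using k0 by simp
  have expC: "P.expectation (R_explore z h M Nav \<phi> s sopt X T) \<le> C"
  proof (cases "integrable P (R_explore z h M Nav \<phi> s sopt X T)")
    case True
    have "P.expectation (R_explore z h M Nav \<phi> s sopt X T) \<le> P.expectation (\<lambda>_. C)"
    proof (rule integral_mono[OF True])
      show "integrable P (\<lambda>_. C)" by simp
      fix \<omega> assume "\<omega> \<in> space P"
      then show "R_explore z h M Nav \<phi> s sopt X T \<omega> \<le> C" using pw unfolding C_def by blast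
    qed
    also have "\<dots> = C" by (simp add: P.prob_space)
    finally show ?thesis .
  next
    case False then show ?thesis using C0 by (simp add: not_integrable_integral_eq)
  qed
  have hh: "real h * real h \<le> 4 * real T powr (2 * \<gamma>)"
  proof -
    have "real h * real h \<le> (2 * real T powr \<gamma>) * (2 * real T powr \<gamma>)"
      using hle by (intro mult_mono) auto
    also have "\<dots> = 4 * (real T powr \<gamma> * real T powr \<gamma>)" by simp
    also have "real T powr \<gamma> * real T powr \<gamma> = real T powr (2 * \<gamma>)"
      by (simp add: powr_add[symmetric])
    finally show ?thesis by simp
  qed
  define Q where "Q = real T powr (z + 2 * \<gamma>) * ln (real T) + real T powr (2 * \<gamma>)"
  have kQ: "real T powr (2 * \<gamma>) * (k + 1) = Q"
    unfolding Q_def k_def K_fun_def by (simp add: powr_add algebra_simps)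
  have Q0: "0 \<le> Q" unfolding kQ[symmetric] using k0 by simp
  have "C = real N * real N * real M * (real h * real h) * (k + 1)"
    unfolding C_def cardA by simp
  also have "\<dots> \<le> real N * real N * real M * (4 * real T powr (2 * \<gamma>)) * (k + 1)"
    using hh k0 by (intro mult_right_mono mult_left_mono) auto
  also have "\<dots> = 4 * real N ^ 2 * real M * Q"
    by (simp add: kQ[symmetric] power2_eq_square mult_ac)
  finally have CQ: "C \<le> 4 * real N ^ 2 * real M * Q" .
  define S where "S = {c n (y n t) | n t. n \<in> {1..N} \<and> t \<in> {1..T}}"
  have S_eq: "S = (\<lambda>(n, t). c n (y n t)) ` ({1..N} \<times> {1..T})" 
  proof (rule set_eqI)
    fix v
    show "v \<in> S \<longleftrightarrow> v \<in> (\<lambda>(n, t). c n (y n t)) ` ({1..N} \<times> {1..T})"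
    proof
      assume "v \<in> S"
      then obtain n t where "v = c n (y n t)" "n \<in> {1..N}" "t \<in> {1..T}" unfolding S_def by blast
      then show "v \<in> (\<lambda>(n, t). c n (y n t)) ` ({1..N} \<times> {1..T})"
        by (intro image_eqI[where x="(n, t)"]) auto
    next
      assume "v \<in> (\<lambda>(n, t). c n (y n t)) ` ({1..N} \<times> {1..T})"
      then obtain n t where "v = c n (y n t)" "n \<in> {1..N}" "t \<in> {1..T}" by auto
      then show "v \<in> S" unfolding S_def by blast
    qed
  qed
  have finS: "finite S" unfolding S_eq by simp
  have neS: "S \<noteq> {}" unfolding S_eq using N T by auto
  have cm: "c_min N T c y \<in> S" unfolding c_min_def S_def[symmetric] using finS neS by simp
  then obtain n0 t0 where n0: "n0 \<in> {1..N}" and e0: "c_min N T c y = c n0 (y n0 t0)"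
    unfolding S_def by blast
  have cpos: "0 < c_min N T c y" unfolding e0 using c_pos by blast
  have cB: "c_min N T c y \<le> B" unfolding e0 using c_le_B n0 by blast
  have Bc: "1 \<le> B / c_min N T c y" using cpos cB by simp
  have "4 * real N ^ 2 * real M * Q \<le> 4 * real N ^ 2 * real M * Q * (B / c_min N T c y)"
  proof -
    have X0: "0 \<le> 4 * real N ^ 2 * real M * Q" using Q0 by simp
    show ?thesis using mult_left_mono[OF Bc X0] by simp
  qed
  also have "\<dots> = 4 * real N ^ 2 * real M * B / c_min N T c y * Q" by simp
  finally show ?thesis using expC CQ unfolding Q_def h_def by linarith
qed

end
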